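(* For every $k\ge 1$, the bi-hypergraph obtained from $\mathcal H_{2k+1}$ by adding a new vertex $v$, removing the edge $\{v_{1,1},v_{1,2},v_{1,3}\}$, and adding the edges $\{v,v_{2k+1,i},v_{2k+1,i+1}\}$ for $i\in[2]$ and $\{v,v_{1,j},v_{2k+1,j}\}$ for $j\in[3]$ is minimal uncolorable.
   Context: A bi-hypergraph $\mathcal H=(V,E)$ consists of a finite vertex set $V$ and a set $E$ of subsets of $V$, called edges, with no edge contained in another. A mapping $f:V\to\mathbb N$ is a proper coloring of $\mathcal H$ if $1<|f(e)|<|e|$ for every $e\in E$, where $f(e)=\{f(v):v\in e\}$. $\mathcal H$ is colorable if it has a proper coloring, and uncolorable otherwise. A subhypergraph of $\mathcal H$ is a bi-hypergraph $(V',E')$ with $V'\subseteq V$, $E'\subseteq E$; $\mathcal H$ is minimal uncolorable if it is uncolorable but every proper subhypergraph of it is colorable. For $k\ge 2$, $\mathcal H_k$ is the $3$-uniform bi-hypergraph with vertex set $\{v_{i,j}: i\in[k], j\in[3]\}$ (all distinct), with the convention $v_{i,4}=v_{i,1}$, $v_{i,5}=v_{i,2}$, whose edges are the sets $\{v_{i,1},v_{i,2},v_{i,3}\}$ for all $i\in[k]$ and the sets $\{v_{q+1,j},v_{q,j},v_{q,j+t}\}$ for all $q\in[k-1]$, $j\in[3]$, $t\in\{1,2\}$. *)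

theory Defs
  imports Main
begin

definition bihypergraph :: "'a set \<Rightarrow> 'a set set \<Rightarrow> bool" where
  "bihypergraph V E \<longleftrightarrow> finite V \<and> (\<forall>e\<in>E. e \<subseteq> V) \<and>
     (\<forall>e\<in>E. \<forall>e'\<in>E. e \<subseteq> e' \<longrightarrow> e = e')"

definition proper_coloring :: "'a set \<Rightarrow> 'a set set \<Rightarrow> ('a \<Rightarrow> nat) \<Rightarrow> bool" where
  "proper_coloring V E f \<longleftrightarrow> (\<forall>e\<in>E. 1 < card (f ` e) \<and> card (f ` e) < card e)"

definition colorable :: "'a set \<Rightarrow> 'a set set \<Rightarrow> bool" where
  "colorable V E \<longleftrightarrow> (\<exists>f. proper_coloring V E f)"

definition subhypergraph :: "'a set \<Rightarrow> 'a set set \<Rightarrow> 'a set \<Rightarrow> 'a set set \<Rightarrow> bool" where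
  "subhypergraph V' E' V E \<longleftrightarrow> bihypergraph V' E' \<and> V' \<subseteq> V \<and> E' \<subseteq> E"

definition minimal_uncolorable :: "'a set \<Rightarrow> 'a set set \<Rightarrow> bool" where
  "minimal_uncolorable V E \<longleftrightarrow> bihypergraph V E \<and> \<not> colorable V E \<and>
     (\<forall>V' E'. subhypergraph V' E' V E \<and> (V', E') \<noteq> (V, E) \<longrightarrow> colorable V' E')"

text \<open>Vertices: Vx i j stands for v_{i,j}; Vnew is the additional vertex v.\<close>
datatype vert = Vx nat nat | Vnew

text \<open>Cyclic index convention v_{i,4} = v_{i,1}, v_{i,5} = v_{i,2}.\<close>
definition cyc :: "nat \<Rightarrow> nat" where
  "cyc j = (j - 1) mod 3 + 1"

definition H_verts :: "nat \<Rightarrow> vert set" where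
  "H_verts k = {Vx i j | i j. i \<in> {1..k} \<and> j \<in> {1..3}}"

definition H_edges :: "nat \<Rightarrow> vert set set" where
  "H_edges k =
     {{Vx i 1, Vx i 2, Vx i 3} | i. i \<in> {1..k}} \<union>
     {{Vx (q+1) j, Vx q j, Vx q (cyc (j + t))} | q j t.
        q \<in> {1..k-1} \<and> j \<in> {1..3} \<and> t \<in> {1,2}}"

definition G_verts :: "nat \<Rightarrow> vert set" where
  "G_verts k = insert Vnew (H_verts (2*k+1))"

definition G_edges :: "nat \<Rightarrow> vert set set" where
  "G_edges k =
     (H_edges (2*k+1) - {{Vx 1 1, Vx 1 2, Vx 1 3}}) \<union>
     {{Vnew, Vx (2*k+1) i, Vx (2*k+1) (i+1)} | i. i \<in> {1,2}} \<union>
     {{Vnew, Vx 1 j, Vx (2*k+1) j} | j. j \<in> {1..3}}"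

end

theory Submission
  imports Defs
begin


definition two_col :: "nat \<Rightarrow> nat \<Rightarrow> nat \<Rightarrow> bool" where
  "two_col a b c \<longleftrightarrow> (a = b \<and> b \<noteq> c) \<or> (a = c \<and> a \<noteq> b) \<or> (b = c \<and> a \<noteq> b)"

lemma card3:
  assumes "a \<noteq> b" "a \<noteq> c" "b \<noteq> c"
  shows "(1 < card (f ` {a,b,c}) \<and> card (f ` {a,b,c}) < card {a,b,c}) \<longleftrightarrow> two_col (f a) (f b) (f c)"
  using assms by (auto simp: two_col_def card_insert_if)

lemma two_col_same[simp]: "two_col a b b \<longleftrightarrow> a \<noteq> b"
  by (auto simp: two_col_def)
lemma two_col_diff: "b \<noteq> c \<Longrightarrow> two_col a b c \<longleftrightarrow> a = b \<or> a = c"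
  by (auto simp: two_col_def)

definition pat :: "nat \<Rightarrow> nat \<Rightarrow> nat \<Rightarrow> nat \<Rightarrow> nat \<Rightarrow> nat" where
  "pat c x y q j = (if (j = c) = odd q then y else x)"

lemma cyc_simps: "cyc 2 = 2" "cyc 3 = 3" "cyc 4 = 1" "cyc 5 = 2"
  "cyc (Suc (Suc 0)) = 2" "cyc (Suc (Suc (Suc 0))) = 3" "cyc (Suc (Suc (Suc (Suc 0)))) = 1" "cyc (Suc (Suc (Suc (Suc (Suc 0))))) = 2"
  by (auto simp: cyc_def)

lemma pat_row: "x \<noteq> y \<Longrightarrow> c \<in> {1,2,3} \<Longrightarrow> two_col (pat c x y q 1) (pat c x y q 2) (pat c x y q 3)"
  by (auto simp: pat_def two_col_def)

lemma pat_trans: "x \<noteq> y \<Longrightarrow> j \<in> {1,2,3} \<Longrightarrow> t \<in> {1,2} \<Longrightarrow>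
   two_col (pat c x y (Suc q) j) (pat c x y q j) (pat c x y q (cyc (j+t)))"
  by (auto simp: pat_def two_col_def cyc_simps)

definition trans3 :: "(nat \<Rightarrow> nat) \<Rightarrow> (nat \<Rightarrow> nat) \<Rightarrow> bool" where
  "trans3 a b \<longleftrightarrow> (\<forall>j\<in>{1,2,3}. \<forall>t\<in>{1,2::nat}. two_col (b j) (a j) (a (cyc (j+t))))"

lemma trans3_iff: "trans3 a b \<longleftrightarrow> two_col (b 1) (a 1) (a 2) \<and> two_col (b 1) (a 1) (a 3) \<and>
   two_col (b 2) (a 2) (a 3) \<and> two_col (b 2) (a 2) (a 1) \<and> two_col (b 3) (a 3) (a 1) \<and> two_col (b 3) (a 3) (a 2)"
  by (auto simp: trans3_def cyc_simps)

lemma step_pat: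
  assumes "x \<noteq> y" "c \<in> {1,2,3}" "\<forall>j\<in>{1,2,3}. a j = pat c x y q j" "trans3 a b"
    "two_col (b 1) (b 2) (b 3)"
  shows "\<forall>j\<in>{1,2,3}. b j = pat c x y (Suc q) j"
proof -
  have a: "a 1 = pat c x y q 1" "a 2 = pat c x y q 2" "a 3 = pat c x y q 3" using assms(3) by auto
  have yx: "y \<noteq> x" using assms(1) by simp
  have T: "two_col (b 1) (a 1) (a 2) \<and> two_col (b 1) (a 1) (a 3) \<and>
   two_col (b 2) (a 2) (a 3) \<and> two_col (b 2) (a 2) (a 1) \<and> two_col (b 3) (a 3) (a 1) \<and> two_col (b 3) (a 3) (a 2)"
    using assms(4) unfolding trans3_iff .
  from assms(2) consider "c = 1" | "c = 2" | "c = 3" by blast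
  thus ?thesis
  proof cases
    case 1 thus ?thesis using T assms(5) assms(1) yx unfolding a
      by (cases "odd q"; simp add: pat_def two_col_diff; auto)
  next
    case 2 thus ?thesis using T assms(5) assms(1) yx unfolding a
      by (cases "odd q"; simp add: pat_def two_col_diff; auto)
  next
    case 3 thus ?thesis using T assms(5) assms(1) yx unfolding a
      by (cases "odd q"; simp add: pat_def two_col_diff; auto)
  qed
qed

lemma D_trans:
  assumes "j0 \<in> {1,2,3}" "t0 \<in> {1,2}" "c \<in> {1,2,3}" "c \<noteq> j0" "c \<noteq> cyc (j0+t0)"
    "j \<in> {1,2,3}" "t \<in> {1,2}" "(j,t) \<noteq> (j0,t0)"
  shows "two_col (pat j0 0 1 (Suc q) j) (pat c 0 1 q j) (pat c 0 1 q (cyc (j+t)))"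
  using assms by (cases "odd q"; auto simp: pat_def two_col_diff cyc_simps)



definition rowE :: "nat \<Rightarrow> vert set" where "rowE i = {Vx i 1, Vx i 2, Vx i 3}"
definition trE :: "nat \<Rightarrow> nat \<Rightarrow> nat \<Rightarrow> vert set" where
  "trE q j t = {Vx (Suc q) j, Vx q j, Vx q (cyc (j+t))}"
definition NE :: "nat \<Rightarrow> nat \<Rightarrow> vert set" where "NE n i = {Vnew, Vx n i, Vx n (Suc i)}"
definition ME :: "nat \<Rightarrow> nat \<Rightarrow> vert set" where "ME n j = {Vnew, Vx 1 j, Vx n j}"

lemma H_edges_mem: "e \<in> H_edges m \<longleftrightarrow> (\<exists>i. 1 \<le> i \<and> i \<le> m \<and> e = rowE i) \<or>
   (\<exists>q j t. 1 \<le> q \<and> q < m \<and> j \<in> {1,2,3} \<and> t \<in> {1,2} \<and> e = trE q j t)"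
proof -
  have 1: "e \<in> {{Vx i 1, Vx i 2, Vx i 3} | i. i \<in> {1..m}} \<longleftrightarrow> (\<exists>i. 1 \<le> i \<and> i \<le> m \<and> e = rowE i)"
    unfolding rowE_def by auto
  have 2: "e \<in> {{Vx (q+1) j, Vx q j, Vx q (cyc (j + t))} | q j t. q \<in> {1..m-1} \<and> j \<in> {1..3} \<and> t \<in> {1,2}}
     \<longleftrightarrow> (\<exists>q j t. 1 \<le> q \<and> q < m \<and> j \<in> {1,2,3} \<and> t \<in> {1,2} \<and> e = trE q j t)"
  proof -
    have "{1..3::nat} = {1,2,3}" by auto
    moreover have "\<And>q. q \<in> {1..m-1} \<longleftrightarrow> 1 \<le> q \<and> q < m" by auto
    ultimately show ?thesis unfolding trE_def Suc_eq_plus1[symmetric] by (simp only: mem_Collect_eq) blast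
  qed
  show ?thesis unfolding H_edges_def Un_iff 1 2 ..
qed

lemma rowE_ne1: "i \<noteq> 1 \<Longrightarrow> rowE i \<noteq> rowE 1"
proof
  assume "i \<noteq> 1" "rowE i = rowE 1"
  have "Vx i 1 \<in> rowE i" by (simp add: rowE_def)
  hence "Vx i 1 \<in> rowE 1" using \<open>rowE i = rowE 1\<close> by simp
  thus False using \<open>i \<noteq> 1\<close> unfolding rowE_def by simp
qed

lemma trE_ne1: "trE q j t \<noteq> rowE 1"
proof
  assume "trE q j t = rowE 1"
  have "Vx (Suc q) j \<in> trE q j t" "Vx q j \<in> trE q j t" by (simp_all add: trE_def)
  hence "Vx (Suc q) j \<in> rowE 1" "Vx q j \<in> rowE 1" using \<open>trE q j t = rowE 1\<close> by simp_all
  thus False unfolding rowE_def by auto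
qed

lemma G_mem: "e \<in> G_edges k \<longleftrightarrow> (\<exists>i. 2 \<le> i \<and> i \<le> 2*k+1 \<and> e = rowE i) \<or>
   (\<exists>q j t. 1 \<le> q \<and> q < 2*k+1 \<and> j \<in> {1,2,3} \<and> t \<in> {1,2} \<and> e = trE q j t) \<or>
   e = NE (2*k+1) 1 \<or> e = NE (2*k+1) 2 \<or> (\<exists>j\<in>{1,2,3}. e = ME (2*k+1) j)"
proof -
  have r1: "{Vx 1 1, Vx 1 2, Vx 1 3} = rowE 1" by (simp add: rowE_def)
  have A: "e \<in> H_edges (2*k+1) - {{Vx 1 1, Vx 1 2, Vx 1 3}} \<longleftrightarrow> (\<exists>i. 2 \<le> i \<and> i \<le> 2*k+1 \<and> e = rowE i) \<or>
   (\<exists>q j t. 1 \<le> q \<and> q < 2*k+1 \<and> j \<in> {1,2,3} \<and> t \<in> {1,2} \<and> e = trE q j t)"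
  proof
    assume "e \<in> H_edges (2*k+1) - {{Vx 1 1, Vx 1 2, Vx 1 3}}"
    hence h: "e \<in> H_edges (2*k+1)" "e \<noteq> rowE 1" using r1 by auto
    from h(1) show "(\<exists>i. 2 \<le> i \<and> i \<le> 2*k+1 \<and> e = rowE i) \<or>
      (\<exists>q j t. 1 \<le> q \<and> q < 2*k+1 \<and> j \<in> {1,2,3} \<and> t \<in> {1,2} \<and> e = trE q j t)"
      unfolding H_edges_mem
    proof (elim disjE exE conjE)
      fix i assume "1 \<le> i" "i \<le> 2*k+1" "e = rowE i"
      hence "i \<noteq> 1" using h(2) by auto
      hence "2 \<le> i" using \<open>1 \<le> i\<close> by simp
      thus ?thesis using \<open>1 \<le> i\<close> \<open>i \<le> 2*k+1\<close> \<open>e = rowE i\<close> by blast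
    qed blast
  next
    assume "(\<exists>i. 2 \<le> i \<and> i \<le> 2*k+1 \<and> e = rowE i) \<or>
      (\<exists>q j t. 1 \<le> q \<and> q < 2*k+1 \<and> j \<in> {1,2,3} \<and> t \<in> {1,2} \<and> e = trE q j t)"
    thus "e \<in> H_edges (2*k+1) - {{Vx 1 1, Vx 1 2, Vx 1 3}}"
    proof (elim disjE exE conjE)
      fix i assume i: "2 \<le> i" "i \<le> 2*k+1" "e = rowE i"
      have "e \<in> H_edges (2*k+1)" unfolding H_edges_mem using i by (intro disjI1 exI[of _ i]) simp
      moreover have "e \<noteq> {Vx 1 1, Vx 1 2, Vx 1 3}" using rowE_ne1[of i] i r1 by simp
      ultimately show ?thesis by simp
    next
      fix q j t assume h: "1 \<le> q" "q < 2*k+1" "j \<in> {1,2,3::nat}" "t \<in> {1,2::nat}" "e = trE q j t"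
      have "e \<in> H_edges (2*k+1)" unfolding H_edges_mem using h
        by (intro disjI2 exI[of _ q] exI[of _ j] exI[of _ t]) simp
      moreover have "e \<noteq> {Vx 1 1, Vx 1 2, Vx 1 3}" using trE_ne1[of q j t] h r1 by simp
      ultimately show ?thesis by simp
    qed
  qed
  have B: "e \<in> {{Vnew, Vx (2*k+1) i, Vx (2*k+1) (i+1)} | i. i \<in> {1,2}} \<longleftrightarrow> e = NE (2*k+1) 1 \<or> e = NE (2*k+1) 2"
    unfolding NE_def by auto
  have C: "e \<in> {{Vnew, Vx 1 j, Vx (2*k+1) j} | j. j \<in> {1..3}} \<longleftrightarrow> (\<exists>j\<in>{1,2,3}. e = ME (2*k+1) j)"
  proof -
    have "{1..3::nat} = {1,2,3}" by auto
    thus ?thesis unfolding ME_def by auto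
  qed
  show ?thesis unfolding G_edges_def Un_iff A B C by blast
qed



definition ok :: "(vert \<Rightarrow> nat) \<Rightarrow> vert set \<Rightarrow> bool" where
  "ok f e \<longleftrightarrow> 1 < card (f ` e) \<and> card (f ` e) < card e"

lemma cyc_ne: "j \<in> {1,2,3} \<Longrightarrow> t \<in> {1,2::nat} \<Longrightarrow> cyc (j+t) \<noteq> j \<and> cyc (j+t) \<in> {1,2,3}"
  by (auto simp: cyc_simps)

lemma ok_row: "ok f (rowE i) \<longleftrightarrow> two_col (f (Vx i 1)) (f (Vx i 2)) (f (Vx i 3))"
  unfolding ok_def rowE_def by (rule card3) auto
lemma ok_tr: assumes "j \<in> {1,2,3}" "t \<in> {1,2}" shows
   "ok f (trE q j t) \<longleftrightarrow> two_col (f (Vx (Suc q) j)) (f (Vx q j)) (f (Vx q (cyc (j+t))))"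
  using cyc_ne[OF assms] unfolding ok_def trE_def by (intro card3) auto
lemma ok_N: "ok f (NE n i) \<longleftrightarrow> two_col (f Vnew) (f (Vx n i)) (f (Vx n (Suc i)))"
  unfolding ok_def NE_def by (rule card3) auto
lemma ok_M: "n \<noteq> 1 \<Longrightarrow> ok f (ME n j) \<longleftrightarrow> two_col (f Vnew) (f (Vx 1 j)) (f (Vx n j))"
  unfolding ok_def ME_def by (rule card3) auto

lemma proper_G:
  fixes f :: "vert \<Rightarrow> nat"
  assumes k: "k \<ge> 1" and n: "n = 2*k+1"
  and H1: "\<And>i. 2 \<le> i \<Longrightarrow> i \<le> n \<Longrightarrow> rowE i \<notin> X \<Longrightarrow> two_col (f (Vx i 1)) (f (Vx i 2)) (f (Vx i 3))"
  and H2: "\<And>q j t. 1 \<le> q \<Longrightarrow> q < n \<Longrightarrow> j \<in> {1,2,3} \<Longrightarrow> t \<in> {1,2} \<Longrightarrow> trE q j t \<notin> X \<Longrightarrow>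
      two_col (f (Vx (Suc q) j)) (f (Vx q j)) (f (Vx q (cyc (j+t))))"
  and H3: "NE n 1 \<notin> X \<Longrightarrow> two_col (f Vnew) (f (Vx n 1)) (f (Vx n 2))"
  and H4: "NE n 2 \<notin> X \<Longrightarrow> two_col (f Vnew) (f (Vx n 2)) (f (Vx n 3))"
  and H5: "\<And>j. j \<in> {1,2,3} \<Longrightarrow> ME n j \<notin> X \<Longrightarrow> two_col (f Vnew) (f (Vx 1 j)) (f (Vx n j))"
  shows "proper_coloring V (G_edges k - X) f"
  unfolding proper_coloring_def
proof
  fix e assume e: "e \<in> G_edges k - X"
  hence eX: "e \<notin> X" and "e \<in> G_edges k" by auto
  hence "(\<exists>i. 2 \<le> i \<and> i \<le> n \<and> e = rowE i) \<or>
   (\<exists>q j t. 1 \<le> q \<and> q < n \<and> j \<in> {1,2,3} \<and> t \<in> {1,2} \<and> e = trE q j t) \<or>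
   e = NE n 1 \<or> e = NE n 2 \<or> (\<exists>j\<in>{1,2,3}. e = ME n j)" unfolding G_mem n by blast
  hence "ok f e"
  proof (elim disjE exE conjE bexE)
    fix i assume "2 \<le> i" "i \<le> n" "e = rowE i" thus ?thesis using H1 eX ok_row by simp
  next
    fix q j t assume "1 \<le> q" "q < n" "j \<in> {1,2,3::nat}" "t \<in> {1,2::nat}" "e = trE q j t"
    thus ?thesis using H2[of q j t] eX ok_tr[of j t f q] by simp
  next
    assume "e = NE n 1" thus ?thesis using H3 eX ok_N[of f n 1] by (simp add: numeral_2_eq_2)
  next
    assume "e = NE n 2" thus ?thesis using H4 eX ok_N[of f n 2] by (simp add: numeral_3_eq_3)
  next
    fix j assume "j \<in> {1,2,3::nat}" "e = ME n j" thus ?thesis using H5[of j] eX ok_M[of n f j] n k by simp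
  qed
  thus "1 < card (f ` e) \<and> card (f ` e) < card e" unfolding ok_def .
qed

lemma rowE_in: "2 \<le> i \<Longrightarrow> i \<le> 2*k+1 \<Longrightarrow> rowE i \<in> G_edges k"
  by (subst G_mem, rule disjI1, rule exI[of _ i]) simp
lemma trE_in: "1 \<le> q \<Longrightarrow> q < 2*k+1 \<Longrightarrow> j \<in> {1,2,3} \<Longrightarrow> t \<in> {1,2} \<Longrightarrow> trE q j t \<in> G_edges k"
  by (subst G_mem, rule disjI2, rule disjI1, rule exI[of _ q], rule exI[of _ j], rule exI[of _ t]) simp
lemma NE_in: "NE (2*k+1) 1 \<in> G_edges k" "NE (2*k+1) 2 \<in> G_edges k"
  by (subst G_mem; simp)+
lemma ME_in: "j \<in> {1,2,3} \<Longrightarrow> ME (2*k+1) j \<in> G_edges k"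
  by (subst G_mem, intro disjI2, rule bexI[of _ j]) simp_all

lemma extractG:
  fixes f :: "vert \<Rightarrow> nat"
  assumes k: "k \<ge> 1" and n: "n = 2*k+1" and P: "proper_coloring V (G_edges k) f"
  shows "\<And>i. 2 \<le> i \<Longrightarrow> i \<le> n \<Longrightarrow> two_col (f (Vx i 1)) (f (Vx i 2)) (f (Vx i 3))"
  and "\<And>q j t. 1 \<le> q \<Longrightarrow> q < n \<Longrightarrow> j \<in> {1,2,3} \<Longrightarrow> t \<in> {1,2} \<Longrightarrow>
      two_col (f (Vx (Suc q) j)) (f (Vx q j)) (f (Vx q (cyc (j+t))))"
  and "two_col (f Vnew) (f (Vx n 1)) (f (Vx n 2))"
  and "two_col (f Vnew) (f (Vx n 2)) (f (Vx n 3))"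
  and "\<And>j. j \<in> {1,2,3} \<Longrightarrow> two_col (f Vnew) (f (Vx 1 j)) (f (Vx n j))"
proof -
  have okall: "\<And>e. e \<in> G_edges k \<Longrightarrow> ok f e" using P unfolding proper_coloring_def ok_def by blast
  show "\<And>i. 2 \<le> i \<Longrightarrow> i \<le> n \<Longrightarrow> two_col (f (Vx i 1)) (f (Vx i 2)) (f (Vx i 3))"
    using okall[OF rowE_in] ok_row n by simp
  show "\<And>q j t. 1 \<le> q \<Longrightarrow> q < n \<Longrightarrow> j \<in> {1,2,3} \<Longrightarrow> t \<in> {1,2} \<Longrightarrow>
      two_col (f (Vx (Suc q) j)) (f (Vx q j)) (f (Vx q (cyc (j+t))))"
    using okall[OF trE_in] ok_tr n by simp
  show "two_col (f Vnew) (f (Vx n 1)) (f (Vx n 2))"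
    using okall[OF NE_in(1)] ok_N[of f n 1] n by (simp add: numeral_2_eq_2)
  show "two_col (f Vnew) (f (Vx n 2)) (f (Vx n 3))"
    using okall[OF NE_in(2)] ok_N[of f n 2] n by (simp add: numeral_3_eq_3)
  show "\<And>j. j \<in> {1,2,3} \<Longrightarrow> two_col (f Vnew) (f (Vx 1 j)) (f (Vx n j))"
    using okall[OF ME_in] ok_M[of n f] n k by simp
qed



lemma induct_pat:
  assumes "x \<noteq> y" "c \<in> {1,2,3}" "q0 \<le> q" "q \<le> n" "\<forall>j\<in>{1,2,3}. R q0 j = pat c x y q0 j"
    "\<And>q. q0 \<le> q \<Longrightarrow> q < n \<Longrightarrow> trans3 (R q) (R (Suc q)) \<and> two_col (R (Suc q) 1) (R (Suc q) 2) (R (Suc q) 3)"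
  shows "\<forall>j\<in>{1,2,3}. R q j = pat c x y q j"
  using assms(3,4)
proof (induction q rule: dec_induct)
  case base thus ?case using assms(5) by simp
next
  case (step m)
  hence IH: "\<forall>j\<in>{1,2,3}. R m j = pat c x y m j" by simp
  have "trans3 (R m) (R (Suc m)) \<and> two_col (R (Suc m) 1) (R (Suc m) 2) (R (Suc m) 3)"
    using assms(6)[of m] step.hyps step.prems by simp
  thus ?case using step_pat[OF assms(1,2) IH] by blast
qed

lemma two_col_pat:
  assumes "two_col (a 1) (a 2) (a 3)"
  shows "\<exists>x y c. x \<noteq> y \<and> c \<in> {1,2,3} \<and> (\<forall>j\<in>{1,2,3}. a j = pat c x y q j)"
proof -
  have "(a 1 = a 2 \<and> a 2 \<noteq> a 3) \<or> (a 1 = a 3 \<and> a 1 \<noteq> a 2) \<or> (a 2 = a 3 \<and> a 1 \<noteq> a 2)"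
    using assms unfolding two_col_def .
  then obtain c x y where c: "c \<in> {1,2,3::nat}" "x \<noteq> y" "\<forall>j\<in>{1,2,3}. a j = (if j = c then y else x)"
  proof (elim disjE conjE)
    assume h: "a 1 = a 2" "a 2 \<noteq> a 3"
    have "\<forall>j\<in>{1,2,3::nat}. a j = (if j = 3 then a 3 else a 1)"
    proof
      fix j :: nat assume "j \<in> {1,2,3}" hence "j = 1 \<or> j = 2 \<or> j = 3" by blast
      thus "a j = (if j = 3 then a 3 else a 1)" using h by (elim disjE) simp_all
    qed
    moreover have "a 1 \<noteq> a 3" using h by simp
    ultimately show ?thesis by (intro that[of 3 "a 1" "a 3"]) simp_all
  next
    assume h: "a 1 = a 3" "a 1 \<noteq> a 2"
    have "\<forall>j\<in>{1,2,3::nat}. a j = (if j = 2 then a 2 else a 1)"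
    proof
      fix j :: nat assume "j \<in> {1,2,3}" hence "j = 1 \<or> j = 2 \<or> j = 3" by blast
      thus "a j = (if j = 2 then a 2 else a 1)" using h by (elim disjE) simp_all
    qed
    thus ?thesis using h by (intro that[of 2 "a 1" "a 2"]) simp_all
  next
    assume h: "a 2 = a 3" "a 1 \<noteq> a 2"
    have "\<forall>j\<in>{1,2,3::nat}. a j = (if j = 1 then a 1 else a 2)"
    proof
      fix j :: nat assume "j \<in> {1,2,3}" hence "j = 1 \<or> j = 2 \<or> j = 3" by blast
      thus "a j = (if j = 1 then a 1 else a 2)" using h by (elim disjE) simp_all
    qed
    moreover have "a 2 \<noteq> a 1" using h by simp
    ultimately show ?thesis by (intro that[of 1 "a 2" "a 1"]) simp_all
  qed
  show ?thesis
  proof (cases "odd q")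
    case True thus ?thesis using c by (intro exI[of _ x] exI[of _ y] exI[of _ c]) (simp add: pat_def)
  next
    case False thus ?thesis using c by (intro exI[of _ y] exI[of _ x] exI[of _ c]) (simp add: pat_def)
  qed
qed

lemma uncol:
  assumes k: "k \<ge> 1"
  shows "\<not> colorable V (G_edges k)"
proof
  assume "colorable V (G_edges k)"
  then obtain f where P: "proper_coloring V (G_edges k) f" unfolding colorable_def by blast
  define n where "n = 2*k+1"
  define R where "R q j = f (Vx q j)" for q j
  define v where "v = f Vnew"
  note E = extractG[OF k n_def P, folded R_def v_def]
  have n2: "2 \<le> n" "odd n" using k unfolding n_def by auto
  have TR: "trans3 (R q) (R (Suc q))" if "1 \<le> q" "q < n" for q
    unfolding trans3_def using E(2) that by blast
  have RW: "two_col (R q 1) (R q 2) (R q 3)" if "2 \<le> q" "q \<le> n" for q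
    using E(1) that by blast
  have step_ok: "trans3 (R q) (R (Suc q)) \<and> two_col (R (Suc q) 1) (R (Suc q) 2) (R (Suc q) 3)"
    if "1 \<le> q" "q < n" for q using TR RW that by simp
  have M: "two_col v (R 1 j) (R n j)" if "j \<in> {1,2,3}" for j using E(5) that by blast
  have N1: "two_col v (R n 1) (R n 2)" and N2: "two_col v (R n 2) (R n 3)" using E(3,4) by auto
  have T1: "two_col (R 2 1) (R 1 1) (R 1 2)" "two_col (R 2 1) (R 1 1) (R 1 3)"
     "two_col (R 2 2) (R 1 2) (R 1 3)" "two_col (R 2 2) (R 1 2) (R 1 1)"
     "two_col (R 2 3) (R 1 3) (R 1 1)" "two_col (R 2 3) (R 1 3) (R 1 2)"
    using TR[of 1] n2 unfolding trans3_iff by (simp_all add: numeral_2_eq_2)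
  consider "two_col (R 1 1) (R 1 2) (R 1 3)" | "R 1 1 = R 1 2 \<and> R 1 2 = R 1 3"
    | "R 1 1 \<noteq> R 1 2 \<and> R 1 1 \<noteq> R 1 3 \<and> R 1 2 \<noteq> R 1 3"
    unfolding two_col_def by blast
  thus False
  proof cases
    case 1
    then obtain x y c where xyc: "x \<noteq> y" "c \<in> {1,2,3}" "\<forall>j\<in>{1,2,3}. R 1 j = pat c x y 1 j"
      using two_col_pat[of "R 1" 1] by blast
    have "\<forall>j\<in>{1,2,3}. R n j = pat c x y n j"
      using induct_pat[of x y c 1 n n R, OF xyc(1,2) _ _ xyc(3)] step_ok n2 by simp
    hence Rn: "\<forall>j\<in>{1,2,3}. R n j = (if j = c then y else x)" using n2 by (simp add: pat_def)
    have R1: "\<forall>j\<in>{1,2,3}. R 1 j = (if j = c then y else x)" using xyc(3) by (simp add: pat_def)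
    have M': "v \<noteq> R 1 1" "v \<noteq> R 1 2" "v \<noteq> R 1 3" using M[of 1] M[of 2] M[of 3] Rn R1 by auto
    show False using xyc(1,2) M' N1 N2 Rn R1 by (auto simp: two_col_def)
  next
    case 2
    define x where "x = R 1 1"
    have R1: "R 1 1 = x" "R 1 2 = x" "R 1 3 = x" using 2 x_def by auto
    have R2x: "R 2 1 \<noteq> x" "R 2 2 \<noteq> x" "R 2 3 \<noteq> x" using T1 R1 by auto
    obtain x2 y2 c where xyc: "x2 \<noteq> y2" "c \<in> {1,2,3}" "\<forall>j\<in>{1,2,3}. R 2 j = pat c x2 y2 2 j"
      using two_col_pat[of "R 2" 2] RW[of 2] n2 by blast
    have R2: "\<forall>j\<in>{1,2,3}. R 2 j = (if j = c then x2 else y2)" using xyc(3) by (simp add: pat_def)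
    have xx: "x2 \<noteq> x" "y2 \<noteq> x" using xyc(2) R2 R2x by auto
    have "\<forall>j\<in>{1,2,3}. R n j = pat c x2 y2 n j"
      using induct_pat[of x2 y2 c 2 n n R, OF xyc(1,2) _ _ xyc(3)] step_ok n2 by simp
    hence Rn: "\<forall>j\<in>{1,2,3}. R n j = (if j = c then y2 else x2)" using n2 by (simp add: pat_def)
    have M': "two_col v x (R n 1)" "two_col v x (R n 2)" "two_col v x (R n 3)"
      using M[of 1] M[of 2] M[of 3] R1 by auto
    show False
    proof (cases "v = x")
      case True thus False using xyc(1,2) xx N1 N2 Rn by (auto simp: two_col_def)
    next
      case False thus False using xyc(1,2) xx M' Rn by (auto simp: two_col_def)
    qed
  next
    case 3
    have "R 2 1 = R 1 1" using T1(1,2) 3 two_col_diff by metis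
    moreover have "R 2 2 = R 1 2" using T1(3,4) 3 two_col_diff by metis
    moreover have "R 2 3 = R 1 3" using T1(5,6) 3 two_col_diff by metis
    moreover have "two_col (R 2 1) (R 2 2) (R 2 3)" using RW[of 2] n2 by simp
    ultimately show False using 3 unfolding two_col_def by metis
  qed
qed



definition col :: "(nat \<Rightarrow> nat \<Rightarrow> nat) \<Rightarrow> nat \<Rightarrow> vert \<Rightarrow> nat" where
  "col R v u = (case u of Vx q j \<Rightarrow> R q j | Vnew \<Rightarrow> v)"

lemma col_simps[simp]: "col R v (Vx q j) = R q j" "col R v Vnew = v"
  by (simp_all add: col_def)

lemma pat_odd: "odd n \<Longrightarrow> pat c x y n j = (if j = c then y else x)"
  by (simp add: pat_def)

lemma col_P:
  assumes k: "k \<ge> 1" and c: "c \<in> {1,2,3}"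
    and H3: "NE (2*k+1) 1 \<notin> X \<Longrightarrow> two_col v (pat c 0 1 (2*k+1) 1) (pat c 0 1 (2*k+1) 2)"
    and H4: "NE (2*k+1) 2 \<notin> X \<Longrightarrow> two_col v (pat c 0 1 (2*k+1) 2) (pat c 0 1 (2*k+1) 3)"
    and H5: "\<And>j. j \<in> {1,2,3} \<Longrightarrow> ME (2*k+1) j \<notin> X \<Longrightarrow> two_col v (pat c 0 1 1 j) (pat c 0 1 (2*k+1) j)"
  shows "colorable V (G_edges k - X)"
proof -
  have o: "odd (2*k+1)" "odd (1::nat)" by simp_all
  have "proper_coloring V (G_edges k - X) (col (\<lambda>q j. pat c 0 1 q j) v)"
    apply (rule proper_G[OF k refl])
    subgoal using pat_row c by simp
    subgoal using pat_trans by simp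
    subgoal using H3 by simp
    subgoal using H4 by simp
    subgoal for j using H5[of j] by simp
    done
  thus ?thesis unfolding colorable_def by blast
qed

lemma col_N1: "k \<ge> 1 \<Longrightarrow> colorable V (G_edges k - {NE (2*k+1) 1})"
  by (rule col_P[where c=1 and v=2]) (auto simp: pat_def)
lemma col_N2: "k \<ge> 1 \<Longrightarrow> colorable V (G_edges k - {NE (2*k+1) 2})"
  by (rule col_P[where c=3 and v=2]) (auto simp: pat_def)
lemma col_M: assumes "k \<ge> 1" "c \<in> {1,2,3}" shows "colorable V (G_edges k - {ME (2*k+1) c})"
proof -
  from assms(2) consider "c = 1" | "c = 2" | "c = 3" by blast
  thus ?thesis
  proof cases
    case 1 show ?thesis unfolding 1 by (rule col_P[where c=1 and v=1]) (use assms in \<open>auto simp: pat_def two_col_def\<close>)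
  next
    case 2 show ?thesis unfolding 2 by (rule col_P[where c=2 and v=1]) (use assms in \<open>auto simp: pat_def two_col_def\<close>)
  next
    case 3 show ?thesis unfolding 3 by (rule col_P[where c=3 and v=1]) (use assms in \<open>auto simp: pat_def two_col_def\<close>)
  qed
qed

lemma third: "j0 \<in> {1,2,3} \<Longrightarrow> t0 \<in> {1,2::nat} \<Longrightarrow> \<exists>c\<in>{1,2,3::nat}. c \<noteq> j0 \<and> c \<noteq> cyc (j0+t0)"
  by (elim insertE; simp add: cyc_simps)

lemma col_D:
  assumes k: "k \<ge> 1" and q0: "1 \<le> q0" "q0 < 2*k+1" and j0: "j0 \<in> {1,2,3}" and t0: "t0 \<in> {1,2}"
  shows "colorable V (G_edges k - {trE q0 j0 t0})"
proof -
  obtain c where c: "c \<in> {1,2,3}" "c \<noteq> j0" "c \<noteq> cyc (j0+t0)" using third[OF j0 t0] by blast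
  define R where "R q j = (if q \<le> q0 then pat c 0 1 q j else pat j0 0 1 q j)" for q j
  have "proper_coloring V (G_edges k - {trE q0 j0 t0}) (col R 1)"
  proof (rule proper_G[OF k refl], goal_cases)
    case (1 i) show ?case using pat_row c(1) j0 unfolding R_def by simp
  next
    case (2 q j t)
    show ?case
    proof (cases "q < q0")
      case True thus ?thesis using pat_trans 2 unfolding R_def by simp
    next
      case False
      show ?thesis
      proof (cases "q = q0")
        case True
        hence "(j,t) \<noteq> (j0,t0)" using 2 by auto
        thus ?thesis using D_trans[OF j0 t0 c, of j t q] 2 True unfolding R_def by simp
      next
        case False
        hence "q > q0" using \<open>\<not> q < q0\<close> by simp
        thus ?thesis using pat_trans 2 unfolding R_def by simp
      qed
    qed
  next
    case 3 show ?case using q0 j0 unfolding R_def by (auto simp: pat_def two_col_def)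
  next
    case 4 show ?case using q0 j0 unfolding R_def by (auto simp: pat_def two_col_def)
  next
    case (5 j) show ?case using q0 j0 c 5 unfolding R_def by (auto simp: pat_def two_col_def)
  qed
  thus ?thesis unfolding colorable_def by blast
qed

lemma E_trans: "j \<in> {1,2,3} \<Longrightarrow> t \<in> {1,2} \<Longrightarrow>
  two_col (if odd q then 2 else 1) (pat 1 1 2 q j) (pat 1 1 2 q (cyc (j+t)))"
  by (cases "odd q"; auto simp: pat_def cyc_simps two_col_def)

lemma col_E:
  assumes k: "k \<ge> 1" and i0: "2 \<le> i0" "i0 \<le> 2*k+1"
  shows "colorable V (G_edges k - {rowE i0})"
proof -
  define n where "n = 2*k+1"
  define m :: nat where "m = (if odd i0 then 1 else 2)"
  define R where "R q j = (if q = 1 then 0 else if q < i0 then pat 1 1 2 q j else if q = i0 then m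
     else pat 1 0 3 q j)" for q j
  define v :: nat where "v = (if i0 = n then 0 else 3)"
  have m: "m \<noteq> 0" "m \<in> {1,2}" unfolding m_def by auto
  have on: "odd n" unfolding n_def by simp
  have "proper_coloring V (G_edges k - {rowE i0}) (col R v)"
  proof (rule proper_G[OF k n_def], goal_cases)
    case (1 i)
    hence "i \<noteq> i0" by auto
    show ?case
    proof (cases "i < i0")
      case True thus ?thesis using pat_row[of 1 2 1 i] 1 unfolding R_def by simp
    next
      case False thus ?thesis using pat_row[of 0 3 1 i] 1 \<open>i \<noteq> i0\<close> unfolding R_def by simp
    qed
  next
    case (2 q j t)
    have cj: "cyc (j+t) \<in> {1,2,3}" using cyc_ne 2 by blast
    show ?case
    proof (cases "q = 1")
      case True
      have a: "R (Suc q) j \<noteq> 0" using m i0 True unfolding R_def by (auto simp: pat_def)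
      have b: "R q j = 0" "R q (cyc (j+t)) = 0" using True unfolding R_def by simp_all
      show ?thesis using a b by simp
    next
      case q1: False
      show ?thesis
      proof (cases "Suc q < i0")
        case True thus ?thesis using pat_trans[of 1 2 j t 1 q] 2 q1 unfolding R_def by simp
      next
        case F1: False
        show ?thesis
        proof (cases "Suc q = i0")
          case True
          have "odd q \<longleftrightarrow> \<not> odd i0" using True by auto
          hence "m = (if odd q then 2 else 1)" unfolding m_def by auto
          thus ?thesis using E_trans[of j t q] 2 q1 True unfolding R_def by simp
        next
          case F2: False
          show ?thesis
          proof (cases "q = i0")
            case True
            have "pat 1 0 3 (Suc q) j \<noteq> m" using m by (auto simp: pat_def)
            thus ?thesis using True q1 m unfolding R_def by simp
          next
            case False
            hence "q > i0" using F1 F2 by simp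
            thus ?thesis using pat_trans[of 0 3 j t 1 q] 2 q1 unfolding R_def by simp
          qed
        qed
      qed
    qed
  next
    case 3
    show ?case
    proof (cases "i0 = n")
      case True thus ?thesis using m i0 unfolding R_def v_def n_def by simp
    next
      case False thus ?thesis using i0 on unfolding R_def v_def n_def by (simp add: pat_def two_col_def)
    qed
  next
    case 4
    show ?case
    proof (cases "i0 = n")
      case True thus ?thesis using m i0 unfolding R_def v_def n_def by simp
    next
      case False thus ?thesis using i0 on unfolding R_def v_def n_def by (simp add: pat_def two_col_def)
    qed
  next
    case (5 j)
    show ?case
    proof (cases "i0 = n")
      case True thus ?thesis using m i0 unfolding R_def v_def n_def by (simp add: two_col_def)
    next
      case False thus ?thesis using i0 on unfolding R_def v_def n_def by (auto simp: pat_def two_col_def)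
    qed
  qed
  thus ?thesis unfolding colorable_def by blast
qed



lemma col_all:
  assumes k: "k \<ge> 1" and e0: "e0 \<in> G_edges k"
  shows "colorable V (G_edges k - {e0})"
  using e0 unfolding G_mem
proof (elim disjE exE conjE bexE)
  fix i assume "2 \<le> i" "i \<le> 2*k+1" "e0 = rowE i" thus ?thesis using col_E[OF k] by simp
next
  fix q j t assume "1 \<le> q" "q < 2*k+1" "j \<in> {1,2,3::nat}" "t \<in> {1,2::nat}" "e0 = trE q j t"
  thus ?thesis using col_D[OF k] by simp
next
  assume "e0 = NE (2*k+1) 1" thus ?thesis using col_N1[OF k] by simp
next
  assume "e0 = NE (2*k+1) 2" thus ?thesis using col_N2[OF k] by simp
next
  fix j assume "j \<in> {1,2,3::nat}" "e0 = ME (2*k+1) j" thus ?thesis using col_M[OF k] by simp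
qed

lemma colorable_mono: "colorable V E \<Longrightarrow> E' \<subseteq> E \<Longrightarrow> colorable V' E'"
  unfolding colorable_def proper_coloring_def by blast

lemma card_edge:
  assumes k: "k \<ge> 1" and e: "e \<in> G_edges k"
  shows "finite e \<and> card e = 3"
  using e unfolding G_mem
proof (elim disjE exE conjE bexE)
  fix i assume "e = rowE i" thus ?thesis by (simp add: rowE_def)
next
  fix q j t assume "j \<in> {1,2,3::nat}" "t \<in> {1,2::nat}" "e = trE q j t"
  thus ?thesis using cyc_ne[of j t] by (simp add: trE_def)
next
  assume "e = NE (2*k+1) 1" thus ?thesis by (simp add: NE_def)
next
  assume "e = NE (2*k+1) 2" thus ?thesis by (simp add: NE_def)
next
  fix j assume "e = ME (2*k+1) j" thus ?thesis using k by (simp add: ME_def)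
qed

lemma Vx_in: "1 \<le> i \<Longrightarrow> i \<le> 2*k+1 \<Longrightarrow> j \<in> {1,2,3} \<Longrightarrow> Vx i j \<in> G_verts k"
  unfolding G_verts_def H_verts_def by auto

lemma edges_sub:
  assumes k: "k \<ge> 1" and e: "e \<in> G_edges k"
  shows "e \<subseteq> G_verts k"
  using e unfolding G_mem
proof (elim disjE exE conjE bexE)
  fix i assume "2 \<le> i" "i \<le> 2*k+1" "e = rowE i" thus ?thesis using Vx_in[of i k] by (simp add: rowE_def)
next
  fix q j t assume "1 \<le> q" "q < 2*k+1" "j \<in> {1,2,3::nat}" "t \<in> {1,2::nat}" "e = trE q j t"
  thus ?thesis using cyc_ne[of j t] Vx_in[of q k] Vx_in[of "Suc q" k] by (simp add: trE_def)
next
  assume "e = NE (2*k+1) 1" thus ?thesis using Vx_in[of "2*k+1" k] by (simp add: NE_def G_verts_def)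
next
  assume "e = NE (2*k+1) 2" thus ?thesis using Vx_in[of "2*k+1" k] by (simp add: NE_def G_verts_def)
next
  fix j assume "j \<in> {1,2,3::nat}" "e = ME (2*k+1) j"
  thus ?thesis using Vx_in[of "2*k+1" k] Vx_in[of 1 k] by (simp add: ME_def G_verts_def)
qed

lemma verts_covered:
  assumes k: "k \<ge> 1" and u: "u \<in> G_verts k"
  shows "\<exists>e\<in>G_edges k. u \<in> e"
proof (cases u)
  case Vnew thus ?thesis using ME_in[of 1 k] by (intro bexI[of _ "ME (2*k+1) 1"]) (simp_all add: ME_def)
next
  case (Vx i j)
  hence ij: "1 \<le> i" "i \<le> 2*k+1" "j \<in> {1,2,3}" using u unfolding G_verts_def H_verts_def by auto
  show ?thesis
  proof (cases "i = 1")
    case True thus ?thesis using ME_in[of j k] ij Vx by (intro bexI[of _ "ME (2*k+1) j"]) (simp_all add: ME_def)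
  next
    case False
    hence "2 \<le> i" using ij by simp
    thus ?thesis using rowE_in[of i k] ij Vx by (intro bexI[of _ "rowE i"]) (auto simp: rowE_def)
  qed
qed

lemma finite_G_verts: "finite (G_verts k)"
proof -
  have "H_verts (2*k+1) \<subseteq> (\<lambda>(i,j). Vx i j) ` ({1..2*k+1} \<times> {1..3})"
    unfolding H_verts_def by auto
  hence "finite (H_verts (2*k+1))" by (rule finite_subset) simp
  thus ?thesis unfolding G_verts_def by simp
qed

theorem mainTheorem18:
  fixes k :: nat
  assumes "k \<ge> 1"
  shows "minimal_uncolorable (G_verts k) (G_edges k)"
proof -
  have bh: "bihypergraph (G_verts k) (G_edges k)"
    unfolding bihypergraph_def
  proof (intro conjI ballI impI)
    show "finite (G_verts k)" by (rule finite_G_verts)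
  next
    fix e assume "e \<in> G_edges k" thus "e \<subseteq> G_verts k" using edges_sub[OF assms] by blast
  next
    fix e e' assume "e \<in> G_edges k" "e' \<in> G_edges k" "e \<subseteq> e'"
    thus "e = e'" using card_edge[OF assms] card_subset_eq by metis
  qed
  have mi: "colorable V' E'" if "subhypergraph V' E' (G_verts k) (G_edges k)" "(V', E') \<noteq> (G_verts k, G_edges k)" for V' E'
  proof (cases "E' = G_edges k")
    case True
    have "bihypergraph V' E'" "V' \<subseteq> G_verts k" using that(1) unfolding subhypergraph_def by auto
    moreover have "G_verts k \<subseteq> V'"
    proof
      fix u assume "u \<in> G_verts k"
      then obtain e where "e \<in> G_edges k" "u \<in> e" using verts_covered[OF assms] by blast
      thus "u \<in> V'" using \<open>bihypergraph V' E'\<close> True unfolding bihypergraph_def by blast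
    qed
    ultimately show ?thesis using that(2) True by auto
  next
    case False
    have "E' \<subseteq> G_edges k" using that(1) unfolding subhypergraph_def by auto
    then obtain e0 where "e0 \<in> G_edges k" "e0 \<notin> E'" using False by blast
    hence "E' \<subseteq> G_edges k - {e0}" using \<open>E' \<subseteq> G_edges k\<close> by blast
    thus ?thesis using colorable_mono col_all[OF assms \<open>e0 \<in> G_edges k\<close>] by blast
  qed
  show ?thesis unfolding minimal_uncolorable_def using bh uncol[OF assms] mi by blast
qed

end
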